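(* Fix $I\ge 2$, $\rho\in(0,1)$, $\varepsilon\in(0,1)$. For every $p\in\mathbb{R}$, the event $C^p_{\mathcal T}(G)\subseteq\Omega$ (the set of states in which $G$ is common $p$-believed) is the same for every information tree $\mathcal T=(F,s)$ on the agent set $\{1,\dots,I\}$ (every forest $F$ and every seeding $s$). Moreover the probability $\mathbb P_{\mathcal T}[C^p_{\mathcal T}(G)]$ is the same for every information tree $\mathcal T$.
   Context: Model. Fix an integer $I\ge2$, agents $\mathcal I=\{1,\dots,I\}$, a prior $\rho\in(0,1)$ and a loss probability $\varepsilon\in(0,1)$. A state of nature $\theta\in\{g,b\}$ has $\Pr(\theta=g)=\rho$. A forest $F$ on $\mathcal I$ is a collection of vertex-disjoint undirected trees $T^1,\dots,T^R$ (connected acyclic graphs) whose vertex sets partition $\mathcal I$; a seeding $s=(s^1,\dots,s^R)$ chooses exactly one vertex $s^r$ of each $T^r$. The pair $\mathcal T=(F,s)$ is an information tree: orient each $T^r$ away from $s^r$ and add a root $0$ (the planner) with an arc $0\to s^r$ for each $r$; this is a directed tree rooted at $0$ in which every agent has a unique direct predecessor. If $\theta=b$ no messages are sent. If $\theta=g$ the planner sends a message along each arc $0\to s^r$, and every agent who receives a message forwards it along every arc leaving her (to all her neighbours except the one she received it from). Each transmission along an arc is lost independently with probability $\varepsilon$; so given $\theta=g$, agent $i$ receives the message iff no arc on the directed path from $0$ to $i$ fails. Agent $i$ observes only $x_i\in\{y,n\}$ (received / not received). The state space is $\Omega=\{g,b\}\times\{y,n\}^I$ and $\mathbb P_{\mathcal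 T}$ is the induced probability on $\Omega$. Events: $G=\{\theta=g\}$, $Y_i=\{x_i=y\}$, $N_i=\Omega\setminus Y_i$, $Y^*=\bigcap_{i}Y_i$. Belief operators: $B^p_i(E)=\{\omega:\mathbb P_{\mathcal T}[E\mid x_i=x_i(\omega)]\ge p\}$, $B^p(E)=\bigcap_{i\in\mathcal I}B^p_i(E)$, $B^{p,0}(E)=E$, $B^{p,\ell}(E)=B^p(B^{p,\ell-1}(E))$, and $C^p_{\mathcal T}(E)=\bigcap_{\ell\ge1}B^{p,\ell}(E)$. *)

theory Defs
  imports Complex_Main "HOL-Library.FuncSet"
begin

(* Agents are 1..I; the planner is the extra root 0 (not an agent). *)
definition agents :: "nat \<Rightarrow> nat set" where
  "agents I = {1..I}"

definition is_path :: "nat set set \<Rightarrow> nat list \<Rightarrow> nat \<Rightarrow> nat \<Rightarrow> bool" where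
  "is_path E p u v \<longleftrightarrow> p \<noteq> [] \<and> hd p = u \<and> last p = v \<and> distinct p \<and>
     (\<forall>k. Suc k < length p \<longrightarrow> {p ! k, p ! Suc k} \<in> E)"

definition connected_in :: "nat set set \<Rightarrow> nat \<Rightarrow> nat \<Rightarrow> bool" where
  "connected_in E u v \<longleftrightarrow> (\<exists>p. is_path E p u v)"

definition forest :: "nat \<Rightarrow> nat set set \<Rightarrow> bool" where
  "forest I E \<longleftrightarrow>
     (\<forall>e\<in>E. \<exists>a b. a \<in> agents I \<and> b \<in> agents I \<and> a \<noteq> b \<and> e = {a, b}) \<and>
     (\<forall>u v p q. is_path E p u v \<and> is_path E q u v \<longrightarrow> p = q)"

definition seeding :: "nat \<Rightarrow> nat set set \<Rightarrow> nat set \<Rightarrow> bool" where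
  "seeding I E S \<longleftrightarrow> S \<subseteq> agents I \<and> (\<forall>i\<in>agents I. \<exists>!s. s \<in> S \<and> connected_in E s i)"

(* Information tree T = (F, s), represented by the edge set of F and the set of seeds. *)
definition info_tree :: "nat \<Rightarrow> nat set set \<Rightarrow> nat set \<Rightarrow> bool" where
  "info_tree I E S \<longleftrightarrow> forest I E \<and> seeding I E S"

(* on_path E S i j: agent j lies on the directed path from the planner 0 to agent i,
   i.e. j is on the path in F from the seed of i's tree to i.  The arcs of the directed
   path 0 -> ... -> i are exactly the arcs entering such agents j. *)
definition on_path :: "nat set set \<Rightarrow> nat set \<Rightarrow> nat \<Rightarrow> nat \<Rightarrow> bool" where
  "on_path E S i j \<longleftrightarrow> (\<exists>s\<in>S. \<exists>p. is_path E p s i \<and> j \<in> set p)"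

(* State space Omega = {g,b} x {y,n}^I: theta = True means g, x i = True means y. *)
type_synonym state = "bool \<times> (nat \<Rightarrow> bool)"

definition Omega :: "nat \<Rightarrow> state set" where
  "Omega I = UNIV \<times> (agents I \<rightarrow>\<^sub>E (UNIV :: bool set))"

(* Probability of a single state.  Each agent j has a unique incoming arc; lost j
   means that arc fails (independently, probability eps). *)
definition state_prob :: "nat \<Rightarrow> real \<Rightarrow> real \<Rightarrow> nat set set \<Rightarrow> nat set \<Rightarrow> state \<Rightarrow> real" where
  "state_prob I rho eps E S \<omega> =
     (if fst \<omega> then
        rho * (\<Sum>lost\<in>agents I \<rightarrow>\<^sub>E (UNIV :: bool set).
                 if (\<forall>i\<in>agents I. snd \<omega> i = (\<forall>j\<in>agents I. on_path E S i j \<longrightarrow> \<not> lost j))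
                 then (\<Prod>j\<in>agents I. if lost j then eps else 1 - eps) else 0)
      else (if (\<forall>i\<in>agents I. \<not> snd \<omega> i) then 1 - rho else 0))"

definition Prob :: "nat \<Rightarrow> real \<Rightarrow> real \<Rightarrow> nat set set \<Rightarrow> nat set \<Rightarrow> state set \<Rightarrow> real" where
  "Prob I rho eps E S A = (\<Sum>\<omega>\<in>A \<inter> Omega I. state_prob I rho eps E S \<omega>)"

definition cond_prob :: "nat \<Rightarrow> real \<Rightarrow> real \<Rightarrow> nat set set \<Rightarrow> nat set \<Rightarrow> state set \<Rightarrow> nat \<Rightarrow> bool \<Rightarrow> real" where
  "cond_prob I rho eps E S A i v =
     Prob I rho eps E S (A \<inter> {\<omega>. snd \<omega> i = v}) / Prob I rho eps E S {\<omega>. snd \<omega> i = v}"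

definition G_event :: "nat \<Rightarrow> state set" where
  "G_event I = {\<omega>\<in>Omega I. fst \<omega>}"

definition belief_i :: "nat \<Rightarrow> real \<Rightarrow> real \<Rightarrow> nat set set \<Rightarrow> nat set \<Rightarrow> real \<Rightarrow> nat \<Rightarrow> state set \<Rightarrow> state set" where
  "belief_i I rho eps E S p i A = {\<omega>\<in>Omega I. cond_prob I rho eps E S A i (snd \<omega> i) \<ge> p}"

definition belief :: "nat \<Rightarrow> real \<Rightarrow> real \<Rightarrow> nat set set \<Rightarrow> nat set \<Rightarrow> real \<Rightarrow> state set \<Rightarrow> state set" where
  "belief I rho eps E S p A = (\<Inter>i\<in>agents I. belief_i I rho eps E S p i A)"

definition common_belief :: "nat \<Rightarrow> real \<Rightarrow> real \<Rightarrow> nat set set \<Rightarrow> nat set \<Rightarrow> real \<Rightarrow> state set \<Rightarrow> state set" where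
  "common_belief I rho eps E S p A = (\<Inter>l\<in>{1..}. (belief I rho eps E S p ^^ l) A)"

end

theory Submission imports Defs begin

lemma helper1: fixes c x y :: real assumes "0 < c" "0 \<le> y" "y \<le> x" shows "y/(c+y) \<le> x/(c+x)"
proof -
  have "y*c \<le> x*c" using assms by (intro mult_right_mono) auto
  then have "y*(c+x) \<le> x*(c+y)" by (simp add: algebra_simps)
  moreover have "c + y > 0" "c + x > 0" using assms by auto
  ultimately show ?thesis by (simp add: divide_simps)
qed
lemma helper2: fixes rho eps v :: real
  assumes "0<rho" "rho<1" "0<eps" "eps<1" "0<v" "v\<le>1"
  shows "rho*(v - v*(1-eps)) / ((1-rho) + rho*(1 - v*(1-eps))) \<le> rho*eps/(1-rho+rho*eps)"
proof -
  have "v*(1-eps) \<le> 1" using assms by (intro mult_le_one) auto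
  then have "rho*(1 - v*(1-eps)) \<ge> 0" using assms by simp
  then have d1: "(1-rho) + rho*(1 - v*(1-eps)) > 0" using assms by linarith
  have "rho*eps > 0" using assms by simp
  then have d2: "1-rho+rho*eps > 0" using assms by linarith
  have "v*(1-rho+rho*eps) \<le> 1 - rho*v + rho*v*eps"
    using assms by (simp add: algebra_simps)
  then have "(rho*eps)*(v*(1-rho+rho*eps)) \<le> (rho*eps)*(1 - rho*v + rho*v*eps)"
    using assms by (intro mult_left_mono) auto
  then have "rho*(v - v*(1-eps)) * (1-rho+rho*eps) \<le> rho*eps * ((1-rho) + rho*(1 - v*(1-eps)))"
    by (simp add: algebra_simps)
  then show ?thesis using d1 d2 by (simp add: divide_simps)
qed

definition "a1 rho eps = rho*eps/(1-rho+rho*eps)"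

definition "Ystar I = {\<omega>\<in>Omega I. \<forall>i\<in>agents I. snd \<omega> i}"
definition "Yi i = {\<omega>::state. snd \<omega> i}"
definition "Ni i = {\<omega>::state. \<not> snd \<omega> i}"

locale tctx =
  fixes I :: nat and rho eps :: real and E :: "nat set set" and S :: "nat set"
  assumes I1: "I \<ge> 1" and rho0: "0 < rho" and rho1: "rho < 1"
    and eps0: "0 < eps" and eps1: "eps < 1" and tree: "info_tree I E S"
begin

definition "A = agents I"
definition "L = A \<rightarrow>\<^sub>E (UNIV :: bool set)"
definition "u = 1 - eps"
definition "w l = (\<Prod>j\<in>A. if l j then eps else 1 - eps)"
definition "Q \<phi> = (\<Sum>l\<in>L. w l * (if \<phi> l then 1 else 0))"
definition "clean T l = (\<forall>j\<in>T. \<not> l j)"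

lemma finA: "finite A" by (simp add: A_def agents_def)
lemma finL: "finite L" by (simp add: L_def finA finite_PiE)

lemma Q_clean:
  assumes "T \<subseteq> A" shows "Q (clean T) = u ^ card T"
proof -
  define f where "f j b = (if b then eps else 1 - eps) * (if j \<in> T \<and> b then 0 else (1::real))" for j b
  have 1: "w l * (if clean T l then 1 else 0) = (\<Prod>j\<in>A. f j (l j))" for l
  proof -
    have "(\<Prod>j\<in>A. f j (l j)) = w l * (\<Prod>j\<in>A. if j \<in> T \<and> l j then 0 else (1::real))"
      unfolding f_def w_def by (simp add: prod.distrib)
    also have "(\<Prod>j\<in>A. if j \<in> T \<and> l j then 0 else (1::real)) = (if clean T l then 1 else 0)"
    proof (cases "clean T l")
      case True then show ?thesis by (auto simp: clean_def intro!: prod.neutral)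
    next
      case False
      then obtain j where "j \<in> T" "l j" by (auto simp: clean_def)
      then show ?thesis using False assms finA by (subst prod_zero) auto
    qed
    finally show ?thesis by simp
  qed
  have "Q (clean T) = (\<Sum>l\<in>L. \<Prod>j\<in>A. f j (l j))" unfolding Q_def using 1 by simp
  also have "\<dots> = (\<Prod>j\<in>A. \<Sum>b\<in>UNIV. f j b)"
    unfolding L_def by (rule prod_sum_PiE[symmetric]) (auto simp: finA)
  also have "\<dots> = (\<Prod>j\<in>A. if j \<in> T then u else 1)"
    by (rule prod.cong) (auto simp: UNIV_bool f_def u_def)
  also have "\<dots> = (\<Prod>j\<in>{j\<in>A. j \<in> T}. u)"
    using prod.inter_filter[OF finA, of "\<lambda>_. u" "\<lambda>j. j \<in> T"] by simp
  also have "{j\<in>A. j \<in> T} = T" using assms by auto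
  finally show ?thesis by simp
qed


definition "Pt i = {j\<in>A. on_path E S i j}"
definition "X l = restrict (\<lambda>i. clean (Pt i) l) A"
definition "b0 = (False, restrict (\<lambda>_. False) A)"
definition "Pr Z = Prob I rho eps E S Z"

lemma w_nonneg: "w l \<ge> 0"
  unfolding w_def using eps0 eps1 by (auto intro!: prod_nonneg)

lemma Q_nonneg: "Q \<phi> \<ge> 0"
  unfolding Q_def by (auto intro!: sum_nonneg simp: w_nonneg)

lemma Q_mono: "(\<And>l. l \<in> L \<Longrightarrow> \<phi> l \<Longrightarrow> \<psi> l) \<Longrightarrow> Q \<phi> \<le> Q \<psi>"
  unfolding Q_def by (rule sum_mono, rule mult_left_mono) (auto simp: w_nonneg)

lemma Q_diff: "(\<And>l. \<phi> l \<Longrightarrow> \<psi> l) \<Longrightarrow> Q (\<lambda>l. \<psi> l \<and> \<not> \<phi> l) = Q \<psi> - Q \<phi>"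
  unfolding Q_def sum_subtractf[symmetric] by (rule sum.cong) auto

lemma Q_true: "Q (\<lambda>_. True) = 1"
proof -
  have e: "clean {} = (\<lambda>_. True)" by (rule ext) (simp add: clean_def)
  have "Q (clean {}) = 1" using Q_clean[of "{}"] by simp
  then show ?thesis unfolding e .
qed

lemma Q_not: "Q (\<lambda>l. \<not> \<phi> l) = 1 - Q \<phi>"
  using Q_diff[of \<phi> "\<lambda>_. True"] Q_true by simp

lemma sp_rep:
  assumes "\<omega> \<in> Omega I"
  shows "state_prob I rho eps E S \<omega> =
    (if \<omega> = b0 then 1 - rho else 0) + rho * (\<Sum>l\<in>L. w l * (if \<omega> = (True, X l) then 1 else 0))"
proof -
  obtain th x where om: "\<omega> = (th, x)" and x: "x \<in> A \<rightarrow>\<^sub>E (UNIV :: bool set)"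
    using assms by (cases \<omega>) (auto simp: Omega_def A_def)
  have ext: "x = y \<longleftrightarrow> (\<forall>i\<in>A. x i = y i)" if "y \<in> extensional A" for y
    using x that by (auto intro!: extensionalityI[of x A y] simp: PiE_iff)
  show ?thesis
  proof (cases th)
    case True
    have iff: "(\<forall>i\<in>A. x i = (\<forall>j\<in>A. on_path E S i j \<longrightarrow> \<not> l j)) \<longleftrightarrow> x = X l" for l
      by (subst ext) (auto simp: X_def Pt_def clean_def)
    have "state_prob I rho eps E S \<omega> = rho * (\<Sum>l\<in>L. w l * (if \<omega> = (True, X l) then 1 else 0))"
      unfolding om state_prob_def fst_conv snd_conv A_def[symmetric] L_def[symmetric] if_P[OF True]
      by (rule arg_cong[where f="\<lambda>t. rho * t"], rule sum.cong) (simp_all only: iff w_def True, simp)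
    moreover have "\<omega> \<noteq> b0" using True om by (simp add: b0_def)
    ultimately show ?thesis by simp
  next
    case False
    have "(\<forall>i\<in>agents I. \<not> x i) \<longleftrightarrow> x = restrict (\<lambda>_. False) A"
      by (subst ext) (auto simp: A_def)
    then show ?thesis using False om
      by (auto simp: state_prob_def b0_def)
  qed
qed

lemma finOm: "finite (Omega I)"
proof -
  have "Omega I = {True, False} \<times> (A \<rightarrow>\<^sub>E (UNIV :: bool set))"
    by (auto simp: Omega_def A_def)
  then show ?thesis by (simp add: finite_PiE finA)
qed

lemma b0_Om: "b0 \<in> Omega I" by (auto simp: b0_def Omega_def A_def)
lemma X_Om: "(True, X l) \<in> Omega I" by (auto simp: X_def Omega_def A_def)

lemma Pr_rep: "Pr Z = (if b0 \<in> Z then 1 - rho else 0) + rho * Q (\<lambda>l. (True, X l) \<in> Z)"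
proof -
  have "Pr Z = (\<Sum>\<omega>\<in>Z \<inter> Omega I.
      (if \<omega> = b0 then 1 - rho else 0) + rho * (\<Sum>l\<in>L. w l * (if \<omega> = (True, X l) then 1 else 0)))"
    unfolding Pr_def Prob_def by (rule sum.cong) (auto simp: sp_rep)
  also have "\<dots> = (\<Sum>\<omega>\<in>Z \<inter> Omega I. (if \<omega> = b0 then 1 - rho else 0))
     + rho * (\<Sum>l\<in>L. \<Sum>\<omega>\<in>Z \<inter> Omega I. w l * (if \<omega> = (True, X l) then 1 else 0))"
    by (simp add: sum.distrib sum_distrib_left sum.swap[of _ "Z \<inter> Omega I" L])
  also have "(\<Sum>\<omega>\<in>Z \<inter> Omega I. (if \<omega> = b0 then 1 - rho else 0)) = (if b0 \<in> Z then 1 - rho else 0)"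
    using finOm b0_Om by (simp add: sum.delta)
  also have "(\<Sum>l\<in>L. \<Sum>\<omega>\<in>Z \<inter> Omega I. w l * (if \<omega> = (True, X l) then 1 else 0))
      = Q (\<lambda>l. (True, X l) \<in> Z)"
    unfolding Q_def
  proof (rule sum.cong)
    fix l
    have "(\<Sum>\<omega>\<in>Z \<inter> Omega I. w l * (if \<omega> = (True, X l) then 1 else 0))
        = (\<Sum>\<omega>\<in>Z \<inter> Omega I. (if \<omega> = (True, X l) then w l else 0))"
      by (rule sum.cong) auto
    also have "\<dots> = w l * (if (True, X l) \<in> Z then 1 else 0)"
      using finOm X_Om[of l] by (simp add: sum.delta)
    finally show "(\<Sum>\<omega>\<in>Z \<inter> Omega I. w l * (if \<omega> = (True, X l) then 1 else 0))
        = w l * (if (True, X l) \<in> Z then 1 else 0)" .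
  qed simp
  finally show ?thesis .
qed


lemma seed_unique: "i \<in> A \<Longrightarrow> \<exists>!s. s \<in> S \<and> connected_in E s i"
  using tree by (auto simp: info_tree_def seeding_def A_def)

lemma forest_unique: "is_path E p a b \<Longrightarrow> is_path E q a b \<Longrightarrow> p = q"
  using tree by (auto simp: info_tree_def forest_def)

lemma G1: assumes "i \<in> A" shows "i \<in> Pt i"
proof -
  obtain s where s: "s \<in> S" "connected_in E s i" using seed_unique[OF assms] by blast
  then obtain p where p: "is_path E p s i" by (auto simp: connected_in_def)
  then have "i \<in> set p" by (auto simp: is_path_def dest: last_in_set)
  then show ?thesis using s p assms by (auto simp: Pt_def on_path_def)
qed

lemma Pt_sub: "Pt i \<subseteq> A" by (auto simp: Pt_def)
lemma fin_Pt: "finite (Pt i)" using Pt_sub finA finite_subset by blast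
lemma card_Pt: "i \<in> A \<Longrightarrow> 1 \<le> card (Pt i) \<and> card (Pt i) \<le> I"
proof -
  assume "i \<in> A"
  then have "Pt i \<noteq> {}" using G1 by auto
  then have "card (Pt i) \<ge> 1" using fin_Pt by (simp add: Suc_le_eq card_gt_0_iff)
  moreover have "card (Pt i) \<le> card A" using Pt_sub finA by (rule card_mono[rotated])
  ultimately show ?thesis by (simp add: A_def agents_def)
qed

lemma take_path:
  assumes p: "is_path E p s i" and k: "k < length p"
  shows "is_path E (take (Suc k) p) s (p ! k)"
proof -
  have tk: "take (Suc k) p = take k p @ [p ! k]" using k by (rule take_Suc_conv_app_nth)
  have "hd (take (Suc k) p) = s"
  proof -
    have "p \<noteq> []" using k by auto
    then have "hd (take (Suc k) p) = hd p" by (cases p) auto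
    then show ?thesis using p by (simp add: is_path_def)
  qed
  moreover have "last (take (Suc k) p) = p ! k" unfolding tk by simp
  moreover have "distinct (take (Suc k) p)" using p by (auto simp: is_path_def)
  moreover have "\<forall>m. Suc m < length (take (Suc k) p) \<longrightarrow>
      {take (Suc k) p ! m, take (Suc k) p ! Suc m} \<in> E"
    using p k by (auto simp: is_path_def)
  moreover have "take (Suc k) p \<noteq> []" using k by (cases p) auto
  ultimately show ?thesis unfolding is_path_def by blast
qed

lemma G2:
  assumes i: "i \<in> A" and t: "t \<in> Pt i" and ti: "t \<noteq> i"
  shows "card (Pt t) < card (Pt i)"
proof -
  from t obtain s p where s: "s \<in> S" and p: "is_path E p s i" and tp: "t \<in> set p" and tA: "t \<in> A"
    by (auto simp: Pt_def on_path_def)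
  obtain k where k: "k < length p" and pk: "p ! k = t" using tp by (auto simp: in_set_conv_nth)
  define p' where "p' = take (Suc k) p"
  have p': "is_path E p' s t" unfolding p'_def pk[symmetric] by (rule take_path[OF p k])
  have sub: "j \<in> set p'" if "j \<in> Pt t" for j
  proof -
    from that obtain s' q where s': "s' \<in> S" and q: "is_path E q s' t" and jq: "j \<in> set q"
      by (auto simp: Pt_def on_path_def)
    have "s' = s" using seed_unique[OF tA] s s' p' q by (auto simp: connected_in_def)
    then have "q = p'" using q p' forest_unique by blast
    then show ?thesis using jq by simp
  qed
  have "Pt t \<subseteq> Pt i"
  proof
    fix j assume j: "j \<in> Pt t"
    then have "j \<in> set p" using sub[OF j] by (auto simp: p'_def dest: in_set_takeD)
    then show "j \<in> Pt i" using j s p by (auto simp: Pt_def on_path_def)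
  qed
  moreover have "i \<notin> Pt t"
  proof
    assume "i \<in> Pt t"
    then have "i \<in> set p'" by (rule sub)
    then obtain m where m: "m < Suc k" "m < length p" "p ! m = i"
      by (auto simp: p'_def in_set_conv_nth)
    have ne: "p \<noteq> []" and lst: "last p = i" and dp: "distinct p" using p by (auto simp: is_path_def)
    have "p ! (length p - 1) = i" using ne lst by (simp add: last_conv_nth)
    then have "m = length p - 1" using m dp nth_eq_iff_index_eq[of p m "length p - 1"] ne by auto
    then have "k = length p - 1" using m k by auto
    then show False using pk ti ne lst by (simp add: last_conv_nth)
  qed
  ultimately have "Pt t \<subset> Pt i" using G1[OF i] by blast
  then show ?thesis using fin_Pt by (rule psubset_card_mono[rotated])
qed

lemma exists_seed: "\<exists>s\<in>A. card (Pt s) = 1"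
proof -
  have "\<forall>i. i \<in> A \<longrightarrow> card (Pt i) = n \<longrightarrow> (\<exists>s\<in>A. card (Pt s) = 1)" for n
  proof (induction n rule: less_induct)
    case (less n)
    show ?case
    proof (intro allI impI)
      fix i assume i: "i \<in> A" and n: "card (Pt i) = n"
      show "\<exists>s\<in>A. card (Pt s) = 1"
      proof (cases "Pt i \<subseteq> {i}")
        case True
        then have "Pt i = {i}" using G1[OF i] by auto
        then show ?thesis using i by (intro bexI[of _ i]) auto
      next
        case False
        then obtain t where t: "t \<in> Pt i" "t \<noteq> i" by auto
        then have "card (Pt t) < n" using G2[OF i] n by auto
        moreover have "t \<in> A" using t Pt_sub by auto
        ultimately show ?thesis using less by blast
      qed
    qed
  qed
  moreover have "A \<noteq> {}" using I1 by (auto simp: A_def agents_def)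
  ultimately show ?thesis by blast
qed


lemma Xi: "i \<in> A \<Longrightarrow> X l i = clean (Pt i) l" by (simp add: X_def)

lemma memY: "i \<in> A \<Longrightarrow> (True, X l) \<in> Yi i \<longleftrightarrow> clean (Pt i) l"
  by (simp add: Yi_def Xi)
lemma memN: "i \<in> A \<Longrightarrow> (True, X l) \<in> Ni i \<longleftrightarrow> \<not> clean (Pt i) l"
  by (simp add: Ni_def Xi)
lemma b0Y: "i \<in> A \<Longrightarrow> b0 \<notin> Yi i" by (simp add: b0_def Yi_def)
lemma b0N: "i \<in> A \<Longrightarrow> b0 \<in> Ni i" by (simp add: b0_def Ni_def)
lemma b0G: "b0 \<notin> G_event I" by (simp add: b0_def G_event_def)
lemma XG: "(True, X l) \<in> G_event I" using X_Om by (simp add: G_event_def)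

lemma cardA: "card A = I" by (simp add: A_def agents_def)

lemma Pr_Y: assumes "i \<in> A" shows "Pr (Yi i) = rho * u ^ card (Pt i)"
proof -
  have "Q (\<lambda>l. (True, X l) \<in> Yi i) = Q (clean (Pt i))"
    using assms by (simp add: memY)
  then show ?thesis using Pr_rep[of "Yi i"] b0Y[OF assms] Q_clean[OF Pt_sub] by simp
qed

lemma Pr_GY: assumes "i \<in> A" shows "Pr (G_event I \<inter> Yi i) = rho * u ^ card (Pt i)"
proof -
  have "Q (\<lambda>l. (True, X l) \<in> G_event I \<inter> Yi i) = Q (clean (Pt i))"
    using assms by (simp add: memY XG)
  then show ?thesis using Pr_rep[of "G_event I \<inter> Yi i"] b0Y[OF assms] Q_clean[OF Pt_sub] by simp
qed

lemma Pr_N: assumes "i \<in> A" shows "Pr (Ni i) = (1 - rho) + rho * (1 - u ^ card (Pt i))"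
proof -
  have "Q (\<lambda>l. (True, X l) \<in> Ni i) = Q (\<lambda>l. \<not> clean (Pt i) l)"
    using assms by (simp add: memN)
  also have "\<dots> = 1 - u ^ card (Pt i)" using Q_not[of "clean (Pt i)"] Q_clean[OF Pt_sub] by simp
  finally show ?thesis using Pr_rep[of "Ni i"] b0N[OF assms] by simp
qed

lemma Pr_GN: assumes "i \<in> A" shows "Pr (G_event I \<inter> Ni i) = rho * (1 - u ^ card (Pt i))"
proof -
  have "Q (\<lambda>l. (True, X l) \<in> G_event I \<inter> Ni i) = Q (\<lambda>l. \<not> clean (Pt i) l)"
    using assms by (simp add: memN XG)
  also have "\<dots> = 1 - u ^ card (Pt i)" using Q_not[of "clean (Pt i)"] Q_clean[OF Pt_sub] by simp
  finally show ?thesis using Pr_rep[of "G_event I \<inter> Ni i"] b0G by simp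
qed

lemma Anon: "A \<noteq> {}" using I1 by (auto simp: A_def agents_def)

lemma Pr_Ys: "Pr (Ystar I) = rho * u ^ I"
proof -
  have "(True, X l) \<in> Ystar I \<longleftrightarrow> clean A l" for l
  proof -
    have "(True, X l) \<in> Ystar I \<longleftrightarrow> (\<forall>i\<in>A. clean (Pt i) l)"
      using X_Om by (simp add: Ystar_def Xi A_def[symmetric])
    also have "\<dots> \<longleftrightarrow> clean A l"
      using G1 Pt_sub unfolding clean_def by blast
    finally show ?thesis .
  qed
  then have "Q (\<lambda>l. (True, X l) \<in> Ystar I) = Q (clean A)" by simp
  moreover have "b0 \<notin> Ystar I" using Anon by (auto simp: b0_def Ystar_def A_def)
  ultimately show ?thesis using Pr_rep[of "Ystar I"] Q_clean[of A] cardA by simp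
qed

lemma Pr_Om: "Pr (Omega I) = 1"
  using Pr_rep[of "Omega I"] b0_Om X_Om Q_true by simp

lemma Pr_empty: "Pr {} = 0" by (simp add: Pr_def Prob_def)

lemma Pr_mono: assumes "Z \<subseteq> Z'" shows "Pr Z \<le> Pr Z'"
proof -
  have "Q (\<lambda>l. (True, X l) \<in> Z) \<le> Q (\<lambda>l. (True, X l) \<in> Z')" using assms by (intro Q_mono) auto
  then have "rho * Q (\<lambda>l. (True, X l) \<in> Z) \<le> rho * Q (\<lambda>l. (True, X l) \<in> Z')"
    using rho0 by simp
  moreover have "(if b0 \<in> Z then 1 - rho else 0) \<le> (if b0 \<in> Z' then 1 - rho else (0::real))"
    using assms rho1 by auto
  ultimately show ?thesis using Pr_rep[of Z] Pr_rep[of Z'] by linarith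
qed

lemma Pr_nonneg: "Pr Z \<ge> 0" using Pr_mono[of "{}" Z] Pr_empty by simp

lemma Pr_Omint: "Pr (Omega I \<inter> Z) = Pr Z"
  unfolding Pr_def Prob_def by (rule sum.cong) auto

lemma cpT: "cond_prob I rho eps E S Z i True = Pr (Z \<inter> Yi i) / Pr (Yi i)"
  by (simp add: cond_prob_def Pr_def Yi_def)
lemma cpF: "cond_prob I rho eps E S Z i False = Pr (Z \<inter> Ni i) / Pr (Ni i)"
  by (simp add: cond_prob_def Pr_def Ni_def)

lemma cp_mono: assumes "Z \<subseteq> Z'" shows "cond_prob I rho eps E S Z i v \<le> cond_prob I rho eps E S Z' i v"
  unfolding cond_prob_def Pr_def[symmetric]
  by (rule divide_right_mono) (use assms in \<open>auto intro: Pr_mono Pr_nonneg\<close>)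

lemma Pr_bound:
  assumes i: "i \<in> A" and T: "Pt i - {i} \<noteq> {}" and Z: "Z \<subseteq> {\<omega>. \<forall>t\<in>Pt i - {i}. snd \<omega> t}"
  shows "Pr (Z \<inter> Ni i) \<le> rho * (u ^ card (Pt i - {i}) - u ^ card (Pt i))"
proof -
  define T where "T = Pt i - {i}"
  have TA: "T \<subseteq> A" using Pt_sub by (auto simp: T_def)
  have "b0 \<notin> Z"
  proof
    assume "b0 \<in> Z"
    obtain t where t: "t \<in> T" using T by (auto simp: T_def)
    then have "snd b0 t" using Z \<open>b0 \<in> Z\<close> by (auto simp: T_def)
    then show False using t TA by (auto simp: b0_def)
  qed
  then have "Pr (Z \<inter> Ni i) = rho * Q (\<lambda>l. (True, X l) \<in> Z \<inter> Ni i)" using Pr_rep by simp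
  also have "Q (\<lambda>l. (True, X l) \<in> Z \<inter> Ni i) \<le> Q (\<lambda>l. clean T l \<and> \<not> clean (Pt i) l)"
  proof (rule Q_mono)
    fix l assume h: "(True, X l) \<in> Z \<inter> Ni i"
    then have "(True, X l) \<in> Z" by simp
    then have "(True, X l) \<in> {\<omega>. \<forall>t\<in>Pt i - {i}. snd \<omega> t}" using Z by blast
    then have a: "\<forall>t\<in>T. X l t" unfolding T_def by simp
    have b: "\<not> clean (Pt i) l" using h memN[OF i] by simp
    have "clean T l" unfolding clean_def
    proof
      fix t assume t: "t \<in> T"
      then have "t \<in> A" using TA by auto
      then have "clean (Pt t) l" using a t Xi by auto
      then show "\<not> l t" using G1[OF \<open>t \<in> A\<close>] by (auto simp: clean_def)
    qed
    then show "clean T l \<and> \<not> clean (Pt i) l" using b by simp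
  qed
  also have "Q (\<lambda>l. clean T l \<and> \<not> clean (Pt i) l) = Q (clean T) - Q (clean (Pt i))"
    by (rule Q_diff) (auto simp: clean_def T_def)
  also have "\<dots> = u ^ card T - u ^ card (Pt i)" using Q_clean TA Pt_sub by simp
  finally show ?thesis using rho0 by (simp add: T_def)
qed


lemma u_pos: "0 < u" and u_le: "u < 1" using eps0 eps1 by (auto simp: u_def)

lemma Pr_Y_pos: "i \<in> A \<Longrightarrow> Pr (Yi i) > 0"
  using Pr_Y rho0 u_pos by simp
lemma Pr_N_pos: "i \<in> A \<Longrightarrow> Pr (Ni i) > 0"
proof -
  assume i: "i \<in> A"
  have "u ^ card (Pt i) \<le> 1" using u_pos u_le by (intro power_le_one) auto
  then have "rho * (1 - u ^ card (Pt i)) \<ge> 0" using rho0 by simp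
  then show ?thesis using Pr_N[OF i] rho1 by linarith
qed

lemma a1_lt1: "a1 rho eps < 1"
proof -
  have "1 - rho + rho*eps > 0" using rho0 rho1 eps0 by (smt (verit) mult_pos_pos)
  then show ?thesis using rho1 by (simp add: a1_def divide_simps)
qed

lemma a1_pos: "a1 rho eps > 0"
proof -
  have "1 - rho + rho*eps > 0" using rho0 rho1 eps0 by (smt (verit) mult_pos_pos)
  then show ?thesis using rho0 eps0 by (simp add: a1_def)
qed

lemma memB: "\<omega> \<in> belief I rho eps E S p Z \<longleftrightarrow>
   \<omega> \<in> Omega I \<and> (\<forall>i\<in>A. cond_prob I rho eps E S Z i (snd \<omega> i) \<ge> p)"
  using Anon by (auto simp: belief_def belief_i_def A_def)

lemma B_mono: "Z \<subseteq> Z' \<Longrightarrow> belief I rho eps E S p Z \<subseteq> belief I rho eps E S p Z'"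
proof
  fix \<omega> assume Z: "Z \<subseteq> Z'" and "\<omega> \<in> belief I rho eps E S p Z"
  then have om: "\<omega> \<in> Omega I" and h: "\<forall>i\<in>A. cond_prob I rho eps E S Z i (snd \<omega> i) \<ge> p"
    unfolding memB by auto
  have "\<forall>i\<in>A. cond_prob I rho eps E S Z' i (snd \<omega> i) \<ge> p"
    using h cp_mono[OF Z] order_trans by blast
  then show "\<omega> \<in> belief I rho eps E S p Z'" using om memB by blast
qed

lemma cb_sub: "l \<ge> 1 \<Longrightarrow> common_belief I rho eps E S p Z \<subseteq> (belief I rho eps E S p ^^ l) Z"
  unfolding common_belief_def by auto

lemma case1:
  assumes p: "p \<le> a1 rho eps"
  shows "common_belief I rho eps E S p (G_event I) = Omega I"
proof -
  let ?B = "belief I rho eps E S p"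
  have BG: "?B (G_event I) = Omega I"
  proof
    show "?B (G_event I) \<subseteq> Omega I" using memB by auto
    show "Omega I \<subseteq> ?B (G_event I)"
    proof
      fix \<omega> assume om: "\<omega> \<in> Omega I"
      have "cond_prob I rho eps E S (G_event I) i (snd \<omega> i) \<ge> p" if i: "i \<in> A" for i
      proof (cases "snd \<omega> i")
        case True
        have "cond_prob I rho eps E S (G_event I) i True = 1"
          unfolding cpT using Pr_Y[OF i] Pr_GY[OF i] Pr_Y_pos[OF i]
          by (simp add: Int_commute del: mult_eq_0_iff power_eq_0_iff)
        then show ?thesis using True p a1_lt1 by simp
      next
        case False
        define k where "k = card (Pt i)"
        have k1: "k \<ge> 1" using card_Pt[OF i] by (simp add: k_def)
        have "u ^ k \<le> u ^ 1" using u_pos u_le k1 by (intro power_decreasing) auto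
        then have "rho * eps \<le> rho * (1 - u ^ k)" using rho0 by (simp add: u_def)
        then have "rho * eps / ((1 - rho) + rho * eps) \<le> rho * (1 - u ^ k) / ((1 - rho) + rho * (1 - u ^ k))"
          using rho0 rho1 eps0 by (intro helper1) auto
        moreover have "cond_prob I rho eps E S (G_event I) i False = rho * (1 - u ^ k) / ((1 - rho) + rho * (1 - u ^ k))"
          unfolding cpF using Pr_N[OF i] Pr_GN[OF i] by (simp add: k_def)
        ultimately show ?thesis using False p by (simp add: a1_def)
      qed
      then show "\<omega> \<in> ?B (G_event I)" using om memB by auto
    qed
  qed
  have BO: "?B (Omega I) = Omega I"
  proof
    show "?B (Omega I) \<subseteq> Omega I" using memB by auto
    show "Omega I \<subseteq> ?B (Omega I)"
    proof
      fix \<omega> assume om: "\<omega> \<in> Omega I"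
      have "cond_prob I rho eps E S (Omega I) i v = 1" if i: "i \<in> A" for i v
        using Pr_Y_pos[OF i] Pr_N_pos[OF i] by (cases v) (simp_all add: cpT cpF Pr_Omint)
      then show "\<omega> \<in> ?B (Omega I)" using om memB p a1_lt1 by auto
    qed
  qed
  have all: "(?B ^^ Suc l) (G_event I) = Omega I" for l
    by (induction l) (simp_all add: BG BO)
  show ?thesis unfolding common_belief_def
  proof
    show "(\<Inter>l\<in>{1..}. (?B ^^ l) (G_event I)) \<subseteq> Omega I" using all[of 0] by auto
    show "Omega I \<subseteq> (\<Inter>l\<in>{1..}. (?B ^^ l) (G_event I))"
    proof
      fix \<omega> assume "\<omega> \<in> Omega I"
      moreover have "(?B ^^ l) (G_event I) = Omega I" if "l \<in> {1..}" for l
        using all that by (cases l) auto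
      ultimately show "\<omega> \<in> (\<Inter>l\<in>{1..}. (?B ^^ l) (G_event I))" by auto
    qed
  qed
qed


lemma YsY: "i \<in> A \<Longrightarrow> Ystar I \<inter> Yi i = Ystar I" by (auto simp: Ystar_def Yi_def A_def)
lemma YsN: "i \<in> A \<Longrightarrow> Ystar I \<inter> Ni i = {}" by (auto simp: Ystar_def Ni_def A_def)
lemma YN: "Yi i \<inter> Ni i = {}" by (auto simp: Yi_def Ni_def)

lemma Klemma:
  assumes p: "a1 rho eps < p"
  shows "i \<in> A \<Longrightarrow> card (Pt i) \<le> Suc l \<Longrightarrow>
    (belief I rho eps E S p ^^ Suc l) (G_event I) \<subseteq> Yi i"
proof (induction l arbitrary: i)
  case 0
  then have i: "i \<in> A" by simp
  have k: "card (Pt i) = 1" using card_Pt[OF i] 0 by simp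
  show ?case
  proof
    fix \<omega> assume "\<omega> \<in> (belief I rho eps E S p ^^ Suc 0) (G_event I)"
    then have h: "\<omega> \<in> belief I rho eps E S p (G_event I)" by simp
    show "\<omega> \<in> Yi i"
    proof (rule ccontr)
      assume "\<omega> \<notin> Yi i"
      then have "snd \<omega> i = False" by (simp add: Yi_def)
      then have ge: "cond_prob I rho eps E S (G_event I) i False \<ge> p" using h i memB by metis
      have "cond_prob I rho eps E S (G_event I) i False = a1 rho eps"
        unfolding cpF using Pr_N[OF i] Pr_GN[OF i] k by (simp add: a1_def u_def)
      then show False using ge p by simp
    qed
  qed
next
  case (Suc l)
  then have i: "i \<in> A" by simp
  define Z where "Z = (belief I rho eps E S p ^^ Suc l) (G_event I)"
  show ?case
  proof
    fix \<omega> assume "\<omega> \<in> (belief I rho eps E S p ^^ Suc (Suc l)) (G_event I)"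
    then have h: "\<omega> \<in> belief I rho eps E S p Z" by (simp add: Z_def)
    show "\<omega> \<in> Yi i"
    proof (rule ccontr)
      assume "\<omega> \<notin> Yi i"
      then have "snd \<omega> i = False" by (simp add: Yi_def)
      then have ge: "cond_prob I rho eps E S Z i False \<ge> p" using h i memB by metis
      have NN: "Pr (Ni i) \<ge> 0" by (rule Pr_nonneg)
      show False
      proof (cases "card (Pt i) \<le> Suc l")
        case True
        then have "Z \<subseteq> Yi i" using Suc.IH[OF i] by (simp add: Z_def)
        then have "Pr (Z \<inter> Ni i) \<le> Pr (Yi i \<inter> Ni i)" by (intro Pr_mono) auto
        then have "Pr (Z \<inter> Ni i) \<le> 0" using YN Pr_empty by simp
        then have "cond_prob I rho eps E S Z i False \<le> 0"
          unfolding cpF using NN by (simp add: divide_nonpos_nonneg)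
        then show False using ge p a1_pos by simp
      next
        case False
        then have k: "card (Pt i) = Suc (Suc l)" using Suc.prems by simp
        define T where "T = Pt i - {i}"
        have cT: "card T = Suc l" using k G1[OF i] fin_Pt by (simp add: T_def)
        then have Tne: "T \<noteq> {}" by auto
        have "Z \<subseteq> Yi t" if t: "t \<in> T" for t
        proof -
          have tA: "t \<in> A" using t Pt_sub by (auto simp: T_def)
          have "card (Pt t) < card (Pt i)" using G2[OF i] t by (auto simp: T_def)
          then show ?thesis using Suc.IH[OF tA] k by (simp add: Z_def)
        qed
        then have Zs: "Z \<subseteq> {\<omega>. \<forall>t\<in>Pt i - {i}. snd \<omega> t}" by (auto simp: T_def Yi_def)
        have e: "u ^ card (Pt i) = u ^ Suc l * (1 - eps)" using k by (simp add: u_def mult_ac)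
        have b0': "Pr (Z \<inter> Ni i) \<le> rho * (u ^ card (Pt i - {i}) - u ^ card (Pt i))"
          using Pr_bound[OF i _ Zs] Tne by (simp add: T_def)
        have b: "Pr (Z \<inter> Ni i) \<le> rho * (u ^ Suc l - u ^ Suc l * (1 - eps))"
          using b0' unfolding e cT[unfolded T_def] .
        have "cond_prob I rho eps E S Z i False \<le> rho * (u ^ Suc l - u ^ Suc l * (1 - eps)) / Pr (Ni i)"
          unfolding cpF using b NN by (rule divide_right_mono)
        also have "Pr (Ni i) = (1 - rho) + rho * (1 - u ^ Suc l * (1 - eps))"
          using Pr_N[OF i] k by (simp add: u_def)
        also have "rho * (u ^ Suc l - u ^ Suc l * (1 - eps)) / ((1 - rho) + rho * (1 - u ^ Suc l * (1 - eps)))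
           \<le> a1 rho eps"
          unfolding a1_def using rho0 rho1 eps0 eps1 u_pos u_le
          by (intro helper2) (use power_le_one[of u "Suc l"] in auto)
        finally show False using ge p by simp
      qed
    qed
  qed
qed

lemma EI_sub:
  assumes p: "a1 rho eps < p"
  shows "(belief I rho eps E S p ^^ I) (G_event I) \<subseteq> Ystar I"
proof
  fix \<omega> assume h: "\<omega> \<in> (belief I rho eps E S p ^^ I) (G_event I)"
  have IS: "I = Suc (I - 1)" using I1 by simp
  have "\<omega> \<in> Yi i" if i: "i \<in> A" for i
    using Klemma[OF p i, of "I - 1"] card_Pt[OF i] h IS by auto
  moreover have "\<omega> \<in> Omega I" using h memB IS by (metis funpow.simps(2) o_apply)
  ultimately show "\<omega> \<in> Ystar I" by (auto simp: Ystar_def Yi_def A_def)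
qed

lemma cpYsT: assumes i: "i \<in> A" shows "cond_prob I rho eps E S (Ystar I) i True = u ^ (I - card (Pt i))"
proof -
  have "cond_prob I rho eps E S (Ystar I) i True = (rho * u ^ I) / (rho * u ^ card (Pt i))"
    unfolding cpT YsY[OF i] Pr_Ys Pr_Y[OF i] ..
  also have "\<dots> = u ^ I / u ^ card (Pt i)" using rho0 by simp
  also have "\<dots> = u ^ (I - card (Pt i))" using u_pos card_Pt[OF i] by (simp add: power_diff)
  finally show ?thesis .
qed

lemma case2:
  assumes p1: "a1 rho eps < p" and p2: "p \<le> u ^ (I - 1)"
  shows "common_belief I rho eps E S p (G_event I) = Ystar I"
proof -
  let ?B = "belief I rho eps E S p"
  have pl1: "p \<le> 1" using p2 u_pos u_le by (smt (verit) power_le_one)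
  have YG: "Ystar I \<subseteq> ?B (G_event I)"
  proof
    fix \<omega> assume w: "\<omega> \<in> Ystar I"
    have "cond_prob I rho eps E S (G_event I) i (snd \<omega> i) \<ge> p" if i: "i \<in> A" for i
    proof -
      have "snd \<omega> i" using w i by (auto simp: Ystar_def A_def)
      moreover have "cond_prob I rho eps E S (G_event I) i True = 1"
        unfolding cpT using Pr_Y[OF i] Pr_GY[OF i] Pr_Y_pos[OF i]
        by (simp add: Int_commute del: mult_eq_0_iff power_eq_0_iff)
      ultimately show ?thesis using pl1 by simp
    qed
    then show "\<omega> \<in> ?B (G_event I)" using w memB by (auto simp: Ystar_def)
  qed
  have YY: "Ystar I \<subseteq> ?B (Ystar I)"
  proof
    fix \<omega> assume w: "\<omega> \<in> Ystar I"
    have "cond_prob I rho eps E S (Ystar I) i (snd \<omega> i) \<ge> p" if i: "i \<in> A" for i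
    proof -
      have "snd \<omega> i" using w i by (auto simp: Ystar_def A_def)
      moreover have "u ^ (I - 1) \<le> u ^ (I - card (Pt i))"
        using card_Pt[OF i] u_pos u_le by (intro power_decreasing) auto
      ultimately show ?thesis using cpYsT[OF i] p2 by simp
    qed
    then show "\<omega> \<in> ?B (Ystar I)" using w memB by (auto simp: Ystar_def)
  qed
  have all: "Ystar I \<subseteq> (?B ^^ Suc l) (G_event I)" for l
  proof (induction l)
    case 0 then show ?case using YG by simp
  next
    case (Suc l)
    then have "?B (Ystar I) \<subseteq> ?B ((?B ^^ Suc l) (G_event I))" by (rule B_mono)
    then show ?case using YY by simp
  qed
  show ?thesis
  proof
    show "common_belief I rho eps E S p (G_event I) \<subseteq> Ystar I"
      using cb_sub[of I] I1 EI_sub[OF p1] by auto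
    show "Ystar I \<subseteq> common_belief I rho eps E S p (G_event I)"
      unfolding common_belief_def
    proof
      fix \<omega> assume "\<omega> \<in> Ystar I"
      then have "\<omega> \<in> (?B ^^ l) (G_event I)" if "l \<in> {1..}" for l
        using all that by (cases l) auto
      then show "\<omega> \<in> (\<Inter>l\<in>{1..}. (?B ^^ l) (G_event I))" by auto
    qed
  qed
qed

lemma case3:
  assumes p1: "a1 rho eps < p" and p2: "u ^ (I - 1) < p"
  shows "common_belief I rho eps E S p (G_event I) = {}"
proof -
  let ?B = "belief I rho eps E S p"
  obtain s where s: "s \<in> A" "card (Pt s) = 1" using exists_seed by blast
  have BY: "?B (Ystar I) = {}"
  proof (rule ccontr)
    assume "?B (Ystar I) \<noteq> {}"
    then obtain \<omega> where "\<omega> \<in> ?B (Ystar I)" by auto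
    then have ge: "cond_prob I rho eps E S (Ystar I) s (snd \<omega> s) \<ge> p" using memB s by blast
    show False
    proof (cases "snd \<omega> s")
      case True
      then show False using ge cpYsT[OF s(1)] s(2) p2 by simp
    next
      case False
      have "cond_prob I rho eps E S (Ystar I) s False = 0"
        unfolding cpF YsN[OF s(1)] Pr_empty by simp
      then show False using ge False p1 a1_pos by simp
    qed
  qed
  have "(?B ^^ Suc I) (G_event I) \<subseteq> ?B (Ystar I)"
    using B_mono[OF EI_sub[OF p1]] by simp
  then have "(?B ^^ Suc I) (G_event I) = {}" using BY by simp
  then show ?thesis using cb_sub[of "Suc I"] by auto
qed


lemma cb_eq:
  "common_belief I rho eps E S p (G_event I) =
     (if p \<le> a1 rho eps then Omega I else if p \<le> (1 - eps) ^ (I - 1) then Ystar I else {})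
   \<and> Prob I rho eps E S (common_belief I rho eps E S p (G_event I)) =
     (if p \<le> a1 rho eps then 1 else if p \<le> (1 - eps) ^ (I - 1) then rho * (1 - eps) ^ I else 0)"
  using case1 case2 case3 Pr_Om Pr_Ys Pr_empty unfolding Pr_def u_def
  by (auto simp: not_le)

end

theorem theorem1:
  fixes I :: nat and rho eps p :: real
    and E1 E2 :: "nat set set" and S1 S2 :: "nat set"
  assumes "I \<ge> 2" and "0 < rho" and "rho < 1" and "0 < eps" and "eps < 1"
    and "info_tree I E1 S1" and "info_tree I E2 S2"
  shows "common_belief I rho eps E1 S1 p (G_event I) = common_belief I rho eps E2 S2 p (G_event I)
    \<and> Prob I rho eps E1 S1 (common_belief I rho eps E1 S1 p (G_event I))
      = Prob I rho eps E2 S2 (common_belief I rho eps E2 S2 p (G_event I))"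
proof -
  have t1: "tctx I rho eps E1 S1" using assms by unfold_locales auto
  have t2: "tctx I rho eps E2 S2" using assms by unfold_locales auto
  show ?thesis using tctx.cb_eq[OF t1, of p] tctx.cb_eq[OF t2, of p] by argo
qed

end
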